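(* Let $k=0$ and let $a$ be a regular scale factor (extended evenly to negative arguments). Then $g_{\theta\theta}(\tau,\rho)$ and $g_{\phi\phi}(\tau,\rho,\theta)$ are continuous on $D_{\mathrm{polar}}$, where at points with $\rho=\rho_{\mathcal M_\tau}$ (i.e. $t_0(\tau,\rho)=0$) their values are defined as the limits as $t_0\to0$ (these limits exist).
   Context: A function $a:[0,\infty)\to[0,\infty)$ is a regular scale factor if: (a) $a(0)=0$; (b) $a$ is increasing and continuous on $[0,\infty)$, twice continuously differentiable on $(0,\infty)$, with an inverse function on $[0,\infty)$; (c) $\frac{a(t)\ddot a(t)}{\dot a(t)^2}\le1$ for all $t>0$ (presupposing $\dot a(t)\ne0$). Extend $a$ by $a(-t)=a(t)$. For $0<s<\tau$, $\chi_s(\tau)=\int_s^\tau\frac{1}{a(t)}\frac{a(\tau)}{\sqrt{a^2(\tau)-a^2(t)}}dt$. For $\tau>0$, $\rho_{\mathcal M_\tau}=\int_0^\tau\frac{a(t)}{\sqrt{a^2(\tau)-a^2(t)}}dt$; for $0<\rho<2\rho_{\mathcal M_\tau}$, $t_0(\tau,\rho)$ is the unique $t_0\in(-\tau,\tau)$ with $\rho=\int_{t_0}^\tau\frac{a(t)}{\sqrt{a^2(\tau)-a^2(t)}}dt$. Define $f(\tau,t_0)=\int_{t_0}^{\tau}\frac{\ddot a(t)}{\dot a(t)^2}\left(\frac{\sqrt{a^2(\tau)-a^2(t_0)}}{\sqrt{a^2(\tau)-a^2(t)}}-1\right)dt$ for $0\le t_0<\tau$, $f(\tau,t_0)=2f(\tau,0)-f(\tau,-t_0)$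 for $-\tau<t_0<0$, and $g_{\tau\tau}(\tau,\rho)=-[1-\dot a(\tau)f(\tau,t_0(\tau,\rho))]^2$. Let $\rho_{\max}(\tau)=\inf\{\rho\in(0,2\rho_{\mathcal M_\tau}):g_{\tau\tau}(\tau,\rho)=0\}$ if this set is nonempty, else $2\rho_{\mathcal M_\tau}$. $D_{\mathrm{polar}}=\{(\tau,\rho,\theta,\phi):\tau>0,\ 0<\rho<\rho_{\max}(\tau),\ \theta\in I_\pi,\ \phi\in I_{2\pi}\}$, with $I_\pi,I_{2\pi}$ open intervals of lengths $\pi,2\pi$. For $t_0=t_0(\tau,\rho)\ne0$ and $k=0$: $g_{\theta\theta}(\tau,\rho)=a^2(t_0)\chi_{|t_0|}(\tau)^2$ and $g_{\phi\phi}(\tau,\rho,\theta)=g_{\theta\theta}(\tau,\rho)\sin^2\theta$. *)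

theory Defs
  imports "HOL-Analysis.Analysis"
begin

text \<open>The scale factor is a function
  real \<Rightarrow> real of which only the restriction to [0,\<infinity>) matters; its even extension
  is used below as \<open>a \<bar>t\<bar>\<close>.  Derivatives are \<open>deriv a\<close> and \<open>deriv (deriv a)\<close>.\<close>
definition regular_scale_factor :: "(real \<Rightarrow> real) \<Rightarrow> bool" where
  "regular_scale_factor a \<longleftrightarrow>
     a 0 = 0 \<and>
     strict_mono_on {0..} a \<and>
     continuous_on {0..} a \<and>
     bij_betw a {0..} {0..} \<and>
     (\<forall>t>0. (a has_real_derivative deriv a t) (at t)) \<and>
     (\<forall>t>0. (deriv a has_real_derivative deriv (deriv a) t) (at t)) \<and>
     continuous_on {0<..} (deriv (deriv a)) \<and>
     (\<forall>t>0. deriv a t \<noteq> 0 \<and> a t * deriv (deriv a) t / (deriv a t)\<^sup>2 \<le> 1)"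

definition aext :: "(real \<Rightarrow> real) \<Rightarrow> real \<Rightarrow> real" where
  "aext a t = a \<bar>t\<bar>"

text \<open>\<open>\<chi>_s(\<tau>)\<close> for \<open>0 < s < \<tau>\<close> (improper integral, Henstock--Kurzweil).\<close>
definition chi :: "(real \<Rightarrow> real) \<Rightarrow> real \<Rightarrow> real \<Rightarrow> real" where
  "chi a s \<tau> = integral {s..\<tau>}
     (\<lambda>t. (1 / a t) * (a \<tau> / sqrt ((a \<tau>)\<^sup>2 - (a t)\<^sup>2)))"

definition rho_M :: "(real \<Rightarrow> real) \<Rightarrow> real \<Rightarrow> real" where
  "rho_M a \<tau> = integral {0..\<tau>} (\<lambda>t. a t / sqrt ((a \<tau>)\<^sup>2 - (a t)\<^sup>2))"

definition t0 :: "(real \<Rightarrow> real) \<Rightarrow> real \<Rightarrow> real \<Rightarrow> real" where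
  "t0 a \<tau> \<rho> = (THE s. s \<in> {-\<tau><..<\<tau>} \<and>
      \<rho> = integral {s..\<tau>} (\<lambda>t. aext a t / sqrt ((aext a \<tau>)\<^sup>2 - (aext a t)\<^sup>2)))"

definition f_pos :: "(real \<Rightarrow> real) \<Rightarrow> real \<Rightarrow> real \<Rightarrow> real" where
  "f_pos a \<tau> s = integral {s..\<tau>}
     (\<lambda>t. deriv (deriv a) t / (deriv a t)\<^sup>2 *
          (sqrt ((a \<tau>)\<^sup>2 - (a s)\<^sup>2) / sqrt ((a \<tau>)\<^sup>2 - (a t)\<^sup>2) - 1))"

definition f_fun :: "(real \<Rightarrow> real) \<Rightarrow> real \<Rightarrow> real \<Rightarrow> real" where
  "f_fun a \<tau> s = (if 0 \<le> s then f_pos a \<tau> s else 2 * f_pos a \<tau> 0 - f_pos a \<tau> (- s))"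

definition g_tautau :: "(real \<Rightarrow> real) \<Rightarrow> real \<Rightarrow> real \<Rightarrow> real" where
  "g_tautau a \<tau> \<rho> = - (1 - deriv a \<tau> * f_fun a \<tau> (t0 a \<tau> \<rho>))\<^sup>2"

definition rho_max :: "(real \<Rightarrow> real) \<Rightarrow> real \<Rightarrow> real" where
  "rho_max a \<tau> =
     (let S = {\<rho>. 0 < \<rho> \<and> \<rho> < 2 * rho_M a \<tau> \<and> g_tautau a \<tau> \<rho> = 0}
      in if S \<noteq> {} then Inf S else 2 * rho_M a \<tau>)"

definition D_polar :: "(real \<Rightarrow> real) \<Rightarrow> real \<Rightarrow> real \<Rightarrow> (real \<times> real \<times> real \<times> real) set" where
  "D_polar a c d = {(\<tau>, \<rho>, \<theta>, \<phi>). 0 < \<tau> \<and> 0 < \<rho> \<and> \<rho> < rho_max a \<tau> \<and>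
       \<theta> \<in> {c<..<c + pi} \<and> \<phi> \<in> {d<..<d + 2 * pi}}"

definition gthth_raw :: "(real \<Rightarrow> real) \<Rightarrow> real \<Rightarrow> real \<Rightarrow> real" where
  "gthth_raw a \<tau> s = (aext a s)\<^sup>2 * (chi a \<bar>s\<bar> \<tau>)\<^sup>2"

definition g_thth :: "(real \<Rightarrow> real) \<Rightarrow> real \<Rightarrow> real \<Rightarrow> real" where
  "g_thth a \<tau> \<rho> = (let s = t0 a \<tau> \<rho> in
      if s \<noteq> 0 then gthth_raw a \<tau> s else Lim (at 0) (gthth_raw a \<tau>))"

definition g_phph :: "(real \<Rightarrow> real) \<Rightarrow> real \<Rightarrow> real \<Rightarrow> real \<Rightarrow> real" where
  "g_phph a \<tau> \<rho> \<theta> = g_thth a \<tau> \<rho> * (sin \<theta>)\<^sup>2"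

end

theory Submission
  imports Defs
begin


lemma abs_integral_le:
  fixes g :: "real \<Rightarrow> real"
  assumes "g integrable_on {u..v}" "u \<le> v" "\<And>t. t \<in> {u..v} \<Longrightarrow> \<bar>g t\<bar> \<le> B"
  shows "\<bar>integral {u..v} g\<bar> \<le> B * (v - u)"
proof -
  have "integral {u..v} g \<le> integral {u..v} (\<lambda>t. B)"
  proof (rule integral_le)
    fix t assume "t \<in> {u..v}"
    from assms(3)[OF this] show "g t \<le> B" unfolding abs_le_iff by linarith
  qed (use assms in auto)
  moreover have "integral {u..v} (\<lambda>t. - B) \<le> integral {u..v} g"
  proof (rule integral_le)
    fix t assume "t \<in> {u..v}"
    from assms(3)[OF this] show "- B \<le> g t" unfolding abs_le_iff by linarith
  qed (use assms in auto)
  ultimately show ?thesis using assms(2) by (simp add: content_real abs_le_iff mult.commute)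
qed

lemma pos_integral:
  fixes f :: "real \<Rightarrow> real"
  assumes "continuous_on {p..q} f" "p < q" "\<And>t. t \<in> {p..q} \<Longrightarrow> f t > 0"
  shows "integral {p..q} f > 0"
proof -
  have i: "(f has_integral integral {p..q} f) {p..q}"
    using assms integrable_continuous_interval by blast
  have "integral {p..q} f \<ge> 0" using assms integral_nonneg integrable_continuous_interval
    by (metis less_imp_le)
  moreover have "integral {p..q} f \<noteq> 0"
  proof
    assume "integral {p..q} f = 0"
    then have "f p = 0"
      using has_integral_0_cbox_imp_0[of p q f p] i assms by (auto simp: less_imp_le)
    with assms(3)[of p] assms(2) show False by auto
  qed
  ultimately show ?thesis by linarith
qed

lemma param_tendsto:
  fixes K :: "real \<times> real \<Rightarrow> real"
  assumes cont: "continuous_on ({x1..x2} \<times> {y1..z1}) K"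
    and o: "x1 < x0" "x0 < x2" "y1 < y0" "y0 < z0" "z0 < z1"
    and X: "(X \<longlongrightarrow> x0) F" and Y: "(Y \<longlongrightarrow> y0) F" and Z: "(Z \<longlongrightarrow> z0) F"
  shows "((\<lambda>p. integral {Y p..Z p} (\<lambda>t. K (X p, t))) \<longlongrightarrow> integral {y0..z0} (\<lambda>t. K (x0, t))) F"
proof (rule tendstoI)
  fix e :: real assume e: "e > 0"
  define B where "B = {x1..x2} \<times> {y1..z1}"
  have uc: "uniformly_continuous_on B K"
    unfolding B_def by (rule compact_uniformly_continuous[OF cont]) (simp add: compact_Times)
  have ci: "continuous_on {y1..z1} (\<lambda>t. K (x, t))" if "x \<in> {x1..x2}" for x
    by (rule continuous_on_compose2[OF cont]) (use that in \<open>auto intro!: continuous_intros\<close>)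
  have ii: "(\<lambda>t. K (x, t)) integrable_on {y1..z1}" if "x \<in> {x1..x2}" for x
    using ci[OF that] integrable_continuous_interval by blast
  define \<Phi> where "\<Phi> u = integral {y1..u} (\<lambda>t. K (x0, t))" for u
  have cphi: "continuous_on {y1..z1} \<Phi>"
    unfolding \<Phi>_def using ii[of x0] o by (intro indefinite_integral_continuous_1) auto
  have e3: "e / 3 / (z1 - y1) > 0" using e o by auto
  obtain d1 where d1: "d1 > 0" "\<And>p q. p \<in> B \<Longrightarrow> q \<in> B \<Longrightarrow> dist p q < d1 \<Longrightarrow> dist (K p) (K q) < e / 3 / (z1 - y1)"
    using uc e3 unfolding uniformly_continuous_on_def by metis
  obtain d2 where d2: "d2 > 0" "\<And>u. u \<in> {y1..z1} \<Longrightarrow> dist u z0 < d2 \<Longrightarrow> dist (\<Phi> u) (\<Phi> z0) < e / 3"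
  proof -
    have "z0 \<in> {y1..z1}" "e / 3 > 0" using o e by auto
    then show ?thesis using that cphi unfolding continuous_on_iff by blast
  qed
  obtain d3 where d3: "d3 > 0" "\<And>u. u \<in> {y1..z1} \<Longrightarrow> dist u y0 < d3 \<Longrightarrow> dist (\<Phi> u) (\<Phi> y0) < e / 3"
  proof -
    have "y0 \<in> {y1..z1}" "e / 3 > 0" using o e by auto
    then show ?thesis using that cphi unfolding continuous_on_iff by blast
  qed
  define dx where "dx = min d1 (min (x0 - x1) (x2 - x0))"
  define dy where "dy = min d3 (min (y0 - y1) ((z0 - y0) / 2))"
  define dz where "dz = min d2 (min (z1 - z0) ((z0 - y0) / 2))"
  have "dx > 0" "dy > 0" "dz > 0" using o d1 d2 d3 by (auto simp: dx_def dy_def dz_def)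
  have ev: "eventually (\<lambda>p. dist (X p) x0 < dx \<and> dist (Y p) y0 < dy \<and> dist (Z p) z0 < dz) F"
    using tendstoD[OF X \<open>dx > 0\<close>] tendstoD[OF Y \<open>dy > 0\<close>] tendstoD[OF Z \<open>dz > 0\<close>]
    by (simp add: eventually_conj)
  show "eventually (\<lambda>p. dist (integral {Y p..Z p} (\<lambda>t. K (X p, t))) (integral {y0..z0} (\<lambda>t. K (x0, t))) < e) F"
    using ev
  proof eventually_elim
    case (elim p)
    define x y z where "x = X p" "y = Y p" "z = Z p"
    have hx: "\<bar>x - x0\<bar> < d1" "x1 < x" "x < x2" using elim unfolding x_y_z_def dx_def dist_real_def by auto
    have hy: "\<bar>y - y0\<bar> < d3" "y1 < y" using elim unfolding x_y_z_def dy_def dist_real_def by auto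
    have hz: "\<bar>z - z0\<bar> < d2" "z < z1" using elim unfolding x_y_z_def dz_def dist_real_def by auto
    have yz: "y < z" using elim unfolding x_y_z_def dz_def dy_def dist_real_def abs_less_iff by auto
    have iX: "(\<lambda>t. K (x, t)) integrable_on {y..z}"
      by (rule integrable_subinterval_real[OF ii]) (use hx hy hz yz in auto)
    have i0: "(\<lambda>t. K (x0, t)) integrable_on {y..z}"
      by (rule integrable_subinterval_real[OF ii]) (use hx hy hz yz o in auto)
    have t1: "\<bar>integral {y..z} (\<lambda>t. K (x, t)) - integral {y..z} (\<lambda>t. K (x0, t))\<bar> \<le> e / 3"
    proof -
      have "\<bar>integral {y..z} (\<lambda>t. K (x, t) - K (x0, t))\<bar> \<le> e / 3 / (z1 - y1) * (z - y)"
      proof (rule abs_integral_le)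
        show "(\<lambda>t. K (x, t) - K (x0, t)) integrable_on {y..z}" using iX i0 by (rule integrable_diff)
        show "y \<le> z" using yz by simp
        fix t assume t: "t \<in> {y..z}"
        have "dist (K (x, t)) (K (x0, t)) < e / 3 / (z1 - y1)"
          by (rule d1(2)) (use t hx hy hz o in \<open>auto simp: B_def dist_Pair_Pair dist_real_def\<close>)
        then show "\<bar>K (x, t) - K (x0, t)\<bar> \<le> e / 3 / (z1 - y1)" by (simp add: dist_real_def)
      qed
      also have "\<dots> \<le> e / 3 / (z1 - y1) * (z1 - y1)"
        using e3 hy hz by (intro mult_left_mono) auto
      also have "\<dots> = e / 3" using o by (simp add: field_simps)
      finally show ?thesis using integral_diff[OF iX i0] by simp
    qed
    have j1: "(\<lambda>t. K (x0, t)) integrable_on {y1..z}"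
      by (rule integrable_subinterval_real[OF ii]) (use hx hy hz yz o in auto)
    have j2: "(\<lambda>t. K (x0, t)) integrable_on {y1..z0}"
      by (rule integrable_subinterval_real[OF ii]) (use o in auto)
    have c1: "integral {y..z} (\<lambda>t. K (x0, t)) = \<Phi> z - \<Phi> y"
      using Henstock_Kurzweil_Integration.integral_combine[OF _ _ j1, of y] hy yz unfolding \<Phi>_def by auto
    have c2: "integral {y0..z0} (\<lambda>t. K (x0, t)) = \<Phi> z0 - \<Phi> y0"
      using Henstock_Kurzweil_Integration.integral_combine[OF _ _ j2, of y0] o unfolding \<Phi>_def by auto
    have "dist (\<Phi> z) (\<Phi> z0) < e / 3" using d2(2)[of z] hz hy yz by (auto simp: dist_real_def)
    moreover have "dist (\<Phi> y) (\<Phi> y0) < e / 3" using d3(2)[of y] hz hy yz by (auto simp: dist_real_def)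
    ultimately show ?case using t1 c1 c2 unfolding x_y_z_def[symmetric] dist_real_def by linarith
  qed
qed



context
  fixes a :: "real \<Rightarrow> real"
  assumes R: "regular_scale_factor a"
begin

lemma a0: "a 0 = 0" using R by (simp add: regular_scale_factor_def)

lemma amono: "0 \<le> x \<Longrightarrow> x < y \<Longrightarrow> a x < a y"
  using R unfolding regular_scale_factor_def by (meson atLeast_iff less_eq_real_def order_trans strict_mono_onD)

lemma apos: "0 < t \<Longrightarrow> 0 < a t" using amono[of 0 t] a0 by simp

lemma anonneg: "0 \<le> t \<Longrightarrow> 0 \<le> a t" using apos a0 by (cases "t = 0") (auto intro: less_imp_le)

lemma acont: "continuous_on {0..} a" using R by (simp add: regular_scale_factor_def)

lemma da: "0 < t \<Longrightarrow> (a has_real_derivative deriv a t) (at t)"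
  using R by (simp add: regular_scale_factor_def)

lemma dda: "0 < t \<Longrightarrow> (deriv a has_real_derivative deriv (deriv a) t) (at t)"
  using R by (simp add: regular_scale_factor_def)

lemma ddcont: "continuous_on {0<..} (deriv (deriv a))"
  using R by (simp add: regular_scale_factor_def)

lemma dnz: "0 < t \<Longrightarrow> deriv a t \<noteq> 0"
  using R by (simp add: regular_scale_factor_def)

lemma aisCont: "0 < t \<Longrightarrow> isCont a t" using da DERIV_isCont by blast

lemma acont': "continuous_on {0<..} a"
  by (rule continuous_at_imp_continuous_on) (auto intro: aisCont)

lemma dcont: "continuous_on {0<..} (deriv a)"
  by (rule continuous_at_imp_continuous_on) (auto intro: DERIV_isCont dda)

lemma aabs_cont: "continuous_on UNIV (\<lambda>t. a \<bar>t\<bar>)"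
  by (rule continuous_on_compose2[OF acont]) (auto intro!: continuous_intros)

lemma aabs_isCont: "isCont (\<lambda>t. a \<bar>t\<bar>) t"
  using aabs_cont continuous_on_eq_continuous_at by blast

lemma ibp:
  assumes w: "\<And>t. 0 < t \<Longrightarrow> (w has_real_derivative w' t) (at t)"
    and w'c: "continuous_on {0<..} w'"
    and m: "0 < m" "m \<le> \<tau>"
  shows "((\<lambda>t. w t * a t * deriv a t / sqrt ((a \<tau>)\<^sup>2 - (a t)\<^sup>2)) has_integral
           (w m * sqrt ((a \<tau>)\<^sup>2 - (a m)\<^sup>2) + integral {m..\<tau>} (\<lambda>t. w' t * sqrt ((a \<tau>)\<^sup>2 - (a t)\<^sup>2)))) {m..\<tau>}"
proof -
  define P where "P t = - (w t * sqrt ((a \<tau>)\<^sup>2 - (a t)\<^sup>2))" for t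
  define P' where "P' t = w t * a t * deriv a t / sqrt ((a \<tau>)\<^sup>2 - (a t)\<^sup>2) - w' t * sqrt ((a \<tau>)\<^sup>2 - (a t)\<^sup>2)" for t
  define q where "q t = w' t * sqrt ((a \<tau>)\<^sup>2 - (a t)\<^sup>2)" for t
  have wc: "isCont w t" if "0 < t" for t using w[OF that] DERIV_isCont by blast
  have Pc: "continuous_on {m..\<tau>} P"
    unfolding P_def using m
    by (intro continuous_at_imp_continuous_on ballI) (auto intro!: continuous_intros wc aisCont)
  have Pd: "(P has_vector_derivative P' t) (at t)" if t: "t \<in> {m<..<\<tau>}" for t
  proof -
    have t0: "0 < t" using t m by auto
    have "a t < a \<tau>" using amono[of t \<tau>] t t0 by auto
    moreover have "0 < a t" using apos t0 .
    ultimately have pos: "(a \<tau>)\<^sup>2 - (a t)\<^sup>2 > 0" by (simp add: power_strict_mono)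
    have d1: "((\<lambda>x. (a \<tau>)\<^sup>2 - (a x)\<^sup>2) has_real_derivative (- (2 * a t * deriv a t))) (at t)"
      by (auto intro!: derivative_eq_intros da[OF t0])
    have d2: "((\<lambda>x. sqrt ((a \<tau>)\<^sup>2 - (a x)\<^sup>2)) has_real_derivative
        (inverse (sqrt ((a \<tau>)\<^sup>2 - (a t)\<^sup>2)) / 2 * (- (2 * a t * deriv a t)))) (at t)"
      by (rule DERIV_chain2[OF DERIV_real_sqrt[OF pos] d1])
    note d3 = DERIV_mult[OF w[OF t0] d2]
    have "(P has_real_derivative P' t) (at t)"
      unfolding P_def
      apply (rule DERIV_cong[OF DERIV_minus[OF d3]])
      using pos unfolding P'_def by (simp add: field_simps)
    then show ?thesis using has_real_derivative_iff_has_vector_derivative by blast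
  qed
  have I1: "(P' has_integral (P \<tau> - P m)) {m..\<tau>}"
    using fundamental_theorem_of_calculus_interior[OF m(2) Pc] Pd by blast
  have qc: "continuous_on {m..\<tau>} q"
    unfolding q_def using m
    by (intro continuous_on_mult continuous_on_subset[OF w'c]) (auto intro!: continuous_intros continuous_on_subset[OF acont'])
  have I2: "(q has_integral integral {m..\<tau>} q) {m..\<tau>}"
    using qc integrable_continuous_interval by blast
  have "((\<lambda>t. P' t + q t) has_integral (P \<tau> - P m + integral {m..\<tau>} q)) {m..\<tau>}"
    by (rule has_integral_add[OF I1 I2])
  moreover have "(\<lambda>t. P' t + q t) = (\<lambda>t. w t * a t * deriv a t / sqrt ((a \<tau>)\<^sup>2 - (a t)\<^sup>2))"
    unfolding P'_def q_def by auto
  moreover have "P \<tau> - P m = w m * sqrt ((a \<tau>)\<^sup>2 - (a m)\<^sup>2)" unfolding P_def by simp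
  ultimately show ?thesis unfolding q_def by simp
qed

end


context
  fixes a :: "real \<Rightarrow> real"
  assumes R: "regular_scale_factor a"
begin

lemma sing_tendsto:
  assumes w: "\<And>t. 0 < t \<Longrightarrow> (w has_real_derivative w' t) (at t)"
    and w'c: "continuous_on {0<..} w'"
    and st: "0 < s0" "s0 < \<tau>0"
    and S: "(S \<longlongrightarrow> s0) F" and T: "(T \<longlongrightarrow> \<tau>0) F"
  shows "((\<lambda>p. integral {S p..T p} (\<lambda>t. w t * a t * deriv a t / sqrt ((a (T p))\<^sup>2 - (a t)\<^sup>2)))
          \<longlongrightarrow> integral {s0..\<tau>0} (\<lambda>t. w t * a t * deriv a t / sqrt ((a \<tau>0)\<^sup>2 - (a t)\<^sup>2))) F"
proof -
  define K where "K p = w' (snd p) * sqrt ((a (fst p))\<^sup>2 - (a (snd p))\<^sup>2)" for p :: "real \<times> real"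
  have wc: "isCont w t" if "0 < t" for t using w[OF that] DERIV_isCont by blast
  have Kc: "continuous_on ({\<tau>0/2..2*\<tau>0} \<times> {s0/2..2*\<tau>0}) K"
  proof -
    have c1: "continuous_on ({\<tau>0/2..2*\<tau>0} \<times> {s0/2..2*\<tau>0}) (\<lambda>p. w' (snd p))"
      by (rule continuous_on_compose2[OF w'c]) (use st in \<open>auto intro!: continuous_intros\<close>)
    have c2: "continuous_on ({\<tau>0/2..2*\<tau>0} \<times> {s0/2..2*\<tau>0}) (\<lambda>p. a (snd p))"
      by (rule continuous_on_compose2[OF acont'[OF R]]) (use st in \<open>auto intro!: continuous_intros\<close>)
    have c3: "continuous_on ({\<tau>0/2..2*\<tau>0} \<times> {s0/2..2*\<tau>0}) (\<lambda>p. a (fst p))"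
      by (rule continuous_on_compose2[OF acont'[OF R]]) (use st in \<open>auto intro!: continuous_intros\<close>)
    show ?thesis unfolding K_def by (intro continuous_intros c1 c2 c3)
  qed
  have lim1: "((\<lambda>p. integral {S p..T p} (\<lambda>t. K (T p, t))) \<longlongrightarrow> integral {s0..\<tau>0} (\<lambda>t. K (\<tau>0, t))) F"
    by (rule param_tendsto[OF Kc _ _ _ _ _ T S T]) (use st in auto)
  have lim2: "((\<lambda>p. w (S p) * sqrt ((a (T p))\<^sup>2 - (a (S p))\<^sup>2)) \<longlongrightarrow> w s0 * sqrt ((a \<tau>0)\<^sup>2 - (a s0)\<^sup>2)) F"
    by (intro tendsto_intros isCont_tendsto_compose[OF wc] isCont_tendsto_compose[OF aisCont[OF R]] S T) (use st in auto)
  have ev: "eventually (\<lambda>p. 0 < S p \<and> S p < (s0 + \<tau>0) / 2 \<and> (s0 + \<tau>0) / 2 < T p) F"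
    using order_tendstoD(1)[OF S, of 0] order_tendstoD(2)[OF S, of "(s0 + \<tau>0) / 2"]
      order_tendstoD(1)[OF T, of "(s0 + \<tau>0) / 2"] st by (auto simp: eventually_conj)
  have eq: "integral {x..y} (\<lambda>t. w t * a t * deriv a t / sqrt ((a y)\<^sup>2 - (a t)\<^sup>2))
      = w x * sqrt ((a y)\<^sup>2 - (a x)\<^sup>2) + integral {x..y} (\<lambda>t. K (y, t))" if "0 < x" "x \<le> y" for x y
    using integral_unique[OF ibp[OF R w w'c that]] unfolding K_def by simp
  have "((\<lambda>p. w (S p) * sqrt ((a (T p))\<^sup>2 - (a (S p))\<^sup>2) + integral {S p..T p} (\<lambda>t. K (T p, t)))
      \<longlongrightarrow> w s0 * sqrt ((a \<tau>0)\<^sup>2 - (a s0)\<^sup>2) + integral {s0..\<tau>0} (\<lambda>t. K (\<tau>0, t))) F"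
    by (rule tendsto_add[OF lim2 lim1])
  moreover have "eventually (\<lambda>p. w (S p) * sqrt ((a (T p))\<^sup>2 - (a (S p))\<^sup>2) + integral {S p..T p} (\<lambda>t. K (T p, t))
      = integral {S p..T p} (\<lambda>t. w t * a t * deriv a t / sqrt ((a (T p))\<^sup>2 - (a t)\<^sup>2))) F"
    using ev by eventually_elim (subst eq, auto)
  ultimately show ?thesis using eq[of s0 \<tau>0] st by (simp add: tendsto_cong)
qed

end


definition hF :: "(real \<Rightarrow> real) \<Rightarrow> real \<Rightarrow> real \<Rightarrow> real" where
  "hF a \<tau> t = aext a t / sqrt ((aext a \<tau>)\<^sup>2 - (aext a t)\<^sup>2)"

definition Fi :: "(real \<Rightarrow> real) \<Rightarrow> real \<Rightarrow> real \<Rightarrow> real" where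
  "Fi a \<tau> s = integral {s..\<tau>} (hF a \<tau>)"

context
  fixes a :: "real \<Rightarrow> real"
  assumes R: "regular_scale_factor a"
begin

lemma amono_le: "0 \<le> x \<Longrightarrow> x \<le> y \<Longrightarrow> a x \<le> a y"
  using amono[OF R, of x y] by (cases "x = y") auto

lemma sq_pos: "\<bar>t\<bar> < \<bar>x\<bar> \<Longrightarrow> (a \<bar>x\<bar>)\<^sup>2 - (a \<bar>t\<bar>)\<^sup>2 > 0"
  using amono[OF R, of "\<bar>t\<bar>" "\<bar>x\<bar>"] anonneg[OF R, of "\<bar>t\<bar>"] by (simp add: power_strict_mono)

lemma hF_eq_pos: "0 < t \<Longrightarrow> 0 < \<tau> \<Longrightarrow>
    hF a \<tau> t = (1 / deriv a t) * a t * deriv a t / sqrt ((a \<tau>)\<^sup>2 - (a t)\<^sup>2)"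
  using dnz[OF R, of t] by (simp add: hF_def aext_def)

lemma w1_deriv: "0 < t \<Longrightarrow> ((\<lambda>t. 1 / deriv a t) has_real_derivative
    (- deriv (deriv a) t / (deriv a t)\<^sup>2)) (at t)"
  using dnz[OF R, of t]
  by (auto intro!: derivative_eq_intros dda[OF R] simp: field_simps power2_eq_square)

lemma w1_cont: "continuous_on {0<..} (\<lambda>t. - deriv (deriv a) t / (deriv a t)\<^sup>2)"
  using dnz[OF R] by (auto intro!: continuous_intros ddcont[OF R] dcont[OF R])

lemma hF_box: assumes m: "0 \<le> m" "m < x1"
  shows "continuous_on ({x1..x2} \<times> {-m..m}) (\<lambda>p. hF a (fst p) (snd p))"
proof -
  have c1: "continuous_on ({x1..x2} \<times> {-m..m}) (\<lambda>x. a \<bar>snd x\<bar>)"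
    by (rule continuous_on_compose2[OF aabs_cont[OF R]]) (auto intro!: continuous_intros)
  have c2: "continuous_on ({x1..x2} \<times> {-m..m}) (\<lambda>x. a \<bar>fst x\<bar>)"
    by (rule continuous_on_compose2[OF aabs_cont[OF R]]) (auto intro!: continuous_intros)
  have nz: "sqrt ((a \<bar>fst p\<bar>)\<^sup>2 - (a \<bar>snd p\<bar>)\<^sup>2) \<noteq> 0" if p: "p \<in> {x1..x2} \<times> {-m..m}" for p
  proof -
    have "\<bar>snd p\<bar> < \<bar>fst p\<bar>" using m p by auto
    from sq_pos[OF this] show ?thesis by simp
  qed
  show ?thesis unfolding hF_def aext_def
    by (intro continuous_intros c1 c2) (use nz in auto)
qed

lemma hF_cont: "0 \<le> m \<Longrightarrow> m < \<tau> \<Longrightarrow> continuous_on {-m..m} (hF a \<tau>)"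
  by (rule continuous_on_compose2[OF hF_box[of m \<tau> \<tau>], of _ "\<lambda>t. (\<tau>, t)", simplified])
     (auto intro!: continuous_intros)

lemma hF_nonneg: "\<bar>t\<bar> \<le> \<bar>\<tau>\<bar> \<Longrightarrow> 0 \<le> hF a \<tau> t"
  unfolding hF_def aext_def
  using amono_le[of "\<bar>t\<bar>" "\<bar>\<tau>\<bar>"] anonneg[OF R, of "\<bar>t\<bar>"]
  by (auto intro!: divide_nonneg_nonneg simp: power_mono)

lemma hF_pos: "0 < \<bar>t\<bar> \<Longrightarrow> \<bar>t\<bar> < \<bar>\<tau>\<bar> \<Longrightarrow> 0 < hF a \<tau> t"
  unfolding hF_def aext_def using sq_pos[of t \<tau>] apos[OF R, of "\<bar>t\<bar>"] by auto

lemma hF_even: "hF a \<tau> (- t) = hF a \<tau> t" by (simp add: hF_def aext_def)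

lemma hF_int_pos: assumes "0 < \<tau>" shows "hF a \<tau> integrable_on {0..\<tau>}"
proof -
  have "hF a \<tau> integrable_on {-(\<tau>/2)..\<tau>/2}"
    using hF_cont[of "\<tau>/2" \<tau>] assms integrable_continuous_interval by auto
  then have i1: "hF a \<tau> integrable_on {0..\<tau>/2}"
    by (rule integrable_subinterval_real) (use assms in auto)
  have "(\<lambda>t. (1 / deriv a t) * a t * deriv a t / sqrt ((a \<tau>)\<^sup>2 - (a t)\<^sup>2)) integrable_on {\<tau>/2..\<tau>}"
    using ibp[OF R, where w="\<lambda>t. 1 / deriv a t" and w'="\<lambda>t. - deriv (deriv a) t / (deriv a t)\<^sup>2",
      OF w1_deriv w1_cont, of "\<tau>/2" \<tau>] assms by auto
  then have i2: "hF a \<tau> integrable_on {\<tau>/2..\<tau>}"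
    by (rule iffD1[OF integrable_cong, rotated]) (use assms hF_eq_pos in auto)
  show ?thesis by (rule Henstock_Kurzweil_Integration.integrable_combine[OF _ _ i1 i2]) (use assms in auto)
qed

lemma hF_int: assumes "0 < \<tau>" shows "hF a \<tau> integrable_on {-\<tau>..\<tau>}"
proof -
  have "(\<lambda>t. hF a \<tau> (- t)) integrable_on {-\<tau>..-0}"
    by (rule Henstock_Kurzweil_Integration.integrable_reflect_real[THEN iffD2, OF hF_int_pos[OF assms]])
  then have i: "hF a \<tau> integrable_on {-\<tau>..0}" by (simp add: hF_even)
  show ?thesis by (rule Henstock_Kurzweil_Integration.integrable_combine[OF _ _ i hF_int_pos[OF assms]]) (use assms in auto)
qed

lemma Fi_top: "Fi a \<tau> \<tau> = 0" by (simp add: Fi_def)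

lemma Fi_bot: assumes "0 < \<tau>" shows "Fi a \<tau> (- \<tau>) = 2 * rho_M a \<tau>"
proof -
  have "integral {-\<tau>..0} (hF a \<tau>) = integral {-\<tau>..-0} (\<lambda>t. hF a \<tau> (- t))" by (simp add: hF_even)
  also have "\<dots> = integral {0..\<tau>} (hF a \<tau>)" by (rule Henstock_Kurzweil_Integration.integral_reflect_real[where f="hF a \<tau>" and a=0 and b=\<tau>])
  finally have e1: "integral {-\<tau>..0} (hF a \<tau>) = integral {0..\<tau>} (hF a \<tau>)" .
  have e2: "integral {0..\<tau>} (hF a \<tau>) = rho_M a \<tau>"
    unfolding rho_M_def using assms by (intro integral_cong) (auto simp: hF_def aext_def)
  show ?thesis
    using Henstock_Kurzweil_Integration.integral_combine[OF _ _ hF_int[OF assms], of 0] assms e1 e2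
    by (simp add: Fi_def)
qed

lemma Fi_split: assumes "0 < \<tau>" "-\<tau> \<le> s1" "s1 \<le> s2" "s2 \<le> \<tau>"
  shows "Fi a \<tau> s1 = integral {s1..s2} (hF a \<tau>) + Fi a \<tau> s2"
proof -
  have "hF a \<tau> integrable_on {s1..\<tau>}" by (rule integrable_subinterval_real[OF hF_int[OF assms(1)]]) (use assms in auto)
  from Henstock_Kurzweil_Integration.integral_combine[OF _ _ this, of s2] show ?thesis
    using assms by (simp add: Fi_def)
qed

lemma Fi_strict: assumes "0 < \<tau>" "-\<tau> \<le> s1" "s1 < s2" "s2 \<le> \<tau>"
  shows "Fi a \<tau> s2 < Fi a \<tau> s1"
proof -
  obtain p q where pq: "s1 < p" "p < q" "q < s2" "0 \<notin> {p..q}"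
  proof (cases "0 < s2")
    case True
    define p where "p = (max s1 0 + s2) / 2"
    show ?thesis by (rule that[of p "(p + s2) / 2"]) (use True assms in \<open>auto simp: p_def\<close>)
  next
    case False
    define q where "q = (s1 + s2) / 2"
    show ?thesis by (rule that[of "(s1 + q) / 2" q]) (use False assms in \<open>auto simp: q_def\<close>)
  qed
  define m where "m = max \<bar>p\<bar> \<bar>q\<bar>"
  have m: "0 \<le> m" "m < \<tau>" using pq assms by (auto simp: m_def)
  have int: "hF a \<tau> integrable_on {s1..s2}" by (rule integrable_subinterval_real[OF hF_int[OF assms(1)]]) (use assms in auto)
  have cpq: "continuous_on {p..q} (hF a \<tau>)"
    by (rule continuous_on_subset[OF hF_cont[OF m]]) (auto simp: m_def)
  have pos: "integral {p..q} (hF a \<tau>) > 0"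
  proof (rule pos_integral[OF cpq pq(2)])
    fix t assume t: "t \<in> {p..q}"
    then have "0 < \<bar>t\<bar>" "\<bar>t\<bar> < \<bar>\<tau>\<bar>" using pq m assms by (auto simp: m_def)
    then show "0 < hF a \<tau> t" by (rule hF_pos)
  qed
  have nn: "0 \<le> integral {u..v} (hF a \<tau>)" if "s1 \<le> u" "u \<le> v" "v \<le> s2" for u v
    by (rule integral_nonneg[OF integrable_subinterval_real[OF int]]) (use that assms in \<open>auto intro!: hF_nonneg\<close>)
  have int2: "hF a \<tau> integrable_on {p..s2}" by (rule integrable_subinterval_real[OF int]) (use pq in auto)
  have "integral {s1..s2} (hF a \<tau>) = integral {s1..p} (hF a \<tau>) + integral {p..s2} (hF a \<tau>)"
    using Henstock_Kurzweil_Integration.integral_combine[OF _ _ int, of p] pq by simp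
  moreover have "integral {p..s2} (hF a \<tau>) = integral {p..q} (hF a \<tau>) + integral {q..s2} (hF a \<tau>)"
    using Henstock_Kurzweil_Integration.integral_combine[OF _ _ int2, of q] pq by simp
  ultimately have "integral {s1..s2} (hF a \<tau>) > 0" using pos nn[of s1 p] nn[of q s2] pq by linarith
  then show ?thesis using Fi_split[OF assms(1,2) less_imp_le[OF assms(3)] assms(4)] by linarith
qed

lemma Fi_cont_s: "0 < \<tau> \<Longrightarrow> continuous_on {-\<tau>..\<tau>} (Fi a \<tau>)"
  unfolding Fi_def by (rule indefinite_integral_continuous_1'[OF hF_int])

lemma t0_eq: assumes "0 < \<tau>" "s \<in> {-\<tau><..<\<tau>}" "Fi a \<tau> s = \<rho>" shows "t0 a \<tau> \<rho> = s"
  unfolding t0_def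
proof (rule the_equality)
  show "s \<in> {-\<tau><..<\<tau>} \<and> \<rho> = integral {s..\<tau>} (\<lambda>t. aext a t / sqrt ((aext a \<tau>)\<^sup>2 - (aext a t)\<^sup>2))"
    using assms by (auto simp: Fi_def hF_def[abs_def])
  fix s' assume "s' \<in> {-\<tau><..<\<tau>} \<and> \<rho> = integral {s'..\<tau>} (\<lambda>t. aext a t / sqrt ((aext a \<tau>)\<^sup>2 - (aext a t)\<^sup>2))"
  then have s': "s' \<in> {-\<tau><..<\<tau>}" "Fi a \<tau> s' = \<rho>" by (auto simp: Fi_def hF_def[abs_def])
  show "s' = s"
  proof (rule ccontr)
    assume "s' \<noteq> s"
    then consider "s' < s" | "s < s'" by linarith
    then show False
      by cases (use Fi_strict[OF assms(1), of s' s] Fi_strict[OF assms(1), of s s'] s' assms in auto)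
  qed
qed

lemma t0_props: assumes "0 < \<tau>" "0 < \<rho>" "\<rho> < 2 * rho_M a \<tau>"
  shows "t0 a \<tau> \<rho> \<in> {-\<tau><..<\<tau>}" "Fi a \<tau> (t0 a \<tau> \<rho>) = \<rho>"
proof -
  obtain s where s: "s \<in> {-\<tau>..\<tau>}" "Fi a \<tau> s = \<rho>"
    using IVT2'[of "Fi a \<tau>" \<tau> \<rho> "-\<tau>"] Fi_top Fi_bot[OF assms(1)] Fi_cont_s[OF assms(1)] assms by auto
  have "s \<noteq> \<tau>" "s \<noteq> -\<tau>" using s Fi_top Fi_bot[OF assms(1)] assms by auto
  then have s2: "s \<in> {-\<tau><..<\<tau>}" using s by auto
  from t0_eq[OF assms(1) s2 s(2)] s2 s show "t0 a \<tau> \<rho> \<in> {-\<tau><..<\<tau>}" "Fi a \<tau> (t0 a \<tau> \<rho>) = \<rho>" by auto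
qed

end


context
  fixes a :: "real \<Rightarrow> real"
  assumes R: "regular_scale_factor a"
begin

lemma Fi_tail: assumes "0 < m" "m \<le> \<tau>"
  shows "Fi a \<tau> m = integral {m..\<tau>} (\<lambda>t. (1 / deriv a t) * a t * deriv a t / sqrt ((a \<tau>)\<^sup>2 - (a t)\<^sup>2))"
  unfolding Fi_def using assms by (intro integral_cong) (auto simp: hF_eq_pos[OF R])

lemma Fi_tendsto_tau: assumes t0: "0 < \<tau>0" and s: "s \<in> {-\<tau>0<..<\<tau>0}"
  shows "((\<lambda>\<tau>. Fi a \<tau> s) \<longlongrightarrow> Fi a \<tau>0 s) (at \<tau>0)"
proof -
  define m where "m = (\<bar>s\<bar> + \<tau>0) / 2"
  define x1 where "x1 = (m + \<tau>0) / 2"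
  define m' where "m' = (m + x1) / 2"
  have as: "\<bar>s\<bar> < \<tau>0" using s by auto
  have o1: "0 < m" using as t0 abs_ge_zero[of s] m_def by (simp add: field_simps)
  have o2: "\<bar>s\<bar> < m" using as t0 abs_ge_zero[of s] m_def by (simp add: field_simps)
  have o3: "m < m'" using as t0 abs_ge_zero[of s] m_def x1_def m'_def by (simp add: field_simps)
  have o4: "m' < x1" using as t0 abs_ge_zero[of s] m_def x1_def m'_def by (simp add: field_simps)
  have o5: "x1 < \<tau>0" using as t0 abs_ge_zero[of s] m_def x1_def by (simp add: field_simps)
  note o = o1 o2 o3 o4 o5
  have lim1: "((\<lambda>\<tau>. integral {s..m} (\<lambda>t. hF a \<tau> t)) \<longlongrightarrow> integral {s..m} (\<lambda>t. hF a \<tau>0 t)) (at \<tau>0)"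
    using param_tendsto[OF hF_box[OF R, of m' x1 "2*\<tau>0"], of \<tau>0 s m "\<lambda>\<tau>. \<tau>" "at \<tau>0" "\<lambda>_. s" "\<lambda>_. m"] o
    by auto
  have lim2: "((\<lambda>\<tau>. integral {m..\<tau>} (\<lambda>t. (1 / deriv a t) * a t * deriv a t / sqrt ((a \<tau>)\<^sup>2 - (a t)\<^sup>2)))
      \<longlongrightarrow> integral {m..\<tau>0} (\<lambda>t. (1 / deriv a t) * a t * deriv a t / sqrt ((a \<tau>0)\<^sup>2 - (a t)\<^sup>2))) (at \<tau>0)"
    using sing_tendsto[OF R, where w="\<lambda>t. 1 / deriv a t" and w'="\<lambda>t. - deriv (deriv a) t / (deriv a t)\<^sup>2",
      OF w1_deriv[OF R] w1_cont[OF R], of m \<tau>0 "\<lambda>_. m" "at \<tau>0" "\<lambda>\<tau>. \<tau>"] o by auto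
  have eq: "Fi a \<tau> s = integral {s..m} (\<lambda>t. hF a \<tau> t)
      + integral {m..\<tau>} (\<lambda>t. (1 / deriv a t) * a t * deriv a t / sqrt ((a \<tau>)\<^sup>2 - (a t)\<^sup>2))"
    if "x1 < \<tau>" for \<tau>
    using Fi_split[OF R, of \<tau> s m] Fi_tail[of m \<tau>] that o by auto
  have ev: "eventually (\<lambda>\<tau>. x1 < \<tau>) (at \<tau>0)"
    using order_tendstoD(1)[OF tendsto_ident_at o(5)] .
  have "((\<lambda>\<tau>. integral {s..m} (\<lambda>t. hF a \<tau> t)
      + integral {m..\<tau>} (\<lambda>t. (1 / deriv a t) * a t * deriv a t / sqrt ((a \<tau>)\<^sup>2 - (a t)\<^sup>2))) \<longlongrightarrow> Fi a \<tau>0 s) (at \<tau>0)"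
    using tendsto_add[OF lim1 lim2] eq[of \<tau>0] o by simp
  then show ?thesis
    by (rule tendsto_cong[THEN iffD1, rotated]) (use ev in \<open>eventually_elim, simp add: eq\<close>)
qed

definition V where "V = {p :: real \<times> real. 0 < fst p \<and> 0 < snd p \<and> snd p < 2 * rho_M a (fst p)}"

lemma V_mem: "p \<in> V \<longleftrightarrow> 0 < fst p \<and> 0 < snd p \<and> snd p < 2 * rho_M a (fst p)"
  by (simp add: V_def)

lemma t0_cont: "continuous_on V (\<lambda>p. t0 a (fst p) (snd p))"
  unfolding continuous_on_iff
proof (intro ballI allI impI)
  fix p0 :: "real \<times> real" and e :: real
  assume p0: "p0 \<in> V" and e: "0 < e"
  obtain \<tau>0 \<rho>0 where p0e: "p0 = (\<tau>0, \<rho>0)" by (cases p0)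
  have h: "0 < \<tau>0" "0 < \<rho>0" "\<rho>0 < 2 * rho_M a \<tau>0" using p0 by (auto simp: V_def p0e)
  define s0 where "s0 = t0 a \<tau>0 \<rho>0"
  have s0: "s0 \<in> {-\<tau>0<..<\<tau>0}" "Fi a \<tau>0 s0 = \<rho>0" using t0_props[OF R h] by (auto simp: s0_def)
  define r where "r = min e ((\<tau>0 - \<bar>s0\<bar>) / 2)"
  have r3: "r \<le> (\<tau>0 - \<bar>s0\<bar>) / 2" unfolding r_def by (rule min.cobounded2)
  have r: "0 < r" "r \<le> e" "r \<le> (\<tau>0 - \<bar>s0\<bar>) / 2"
    using e s0 r3 by (auto simp: r_def)
  define sa where "sa = s0 - r"
  define sb where "sb = s0 + r"
  have sab: "sa \<in> {-\<tau>0<..<\<tau>0}" "sb \<in> {-\<tau>0<..<\<tau>0}" using r s0 by (auto simp: sa_def sb_def)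
  have ga: "\<rho>0 < Fi a \<tau>0 sa" using Fi_strict[OF R h(1), of sa s0] s0 r sab by (auto simp: sa_def)
  have gb: "Fi a \<tau>0 sb < \<rho>0" using Fi_strict[OF R h(1), of s0 sb] s0 r sab by (auto simp: sb_def)
  define g where "g = min (Fi a \<tau>0 sa - \<rho>0) (\<rho>0 - Fi a \<tau>0 sb)"
  have g: "0 < g" using ga gb by (auto simp: g_def)
  obtain da where da: "da > 0" "\<And>\<tau>. \<tau> \<noteq> \<tau>0 \<Longrightarrow> dist \<tau> \<tau>0 < da \<Longrightarrow> dist (Fi a \<tau> sa) (Fi a \<tau>0 sa) < g / 2"
    using tendstoD[OF Fi_tendsto_tau[OF h(1) sab(1)], of "g/2"] g unfolding eventually_at by auto
  obtain db where db: "db > 0" "\<And>\<tau>. \<tau> \<noteq> \<tau>0 \<Longrightarrow> dist \<tau> \<tau>0 < db \<Longrightarrow> dist (Fi a \<tau> sb) (Fi a \<tau>0 sb) < g / 2"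
    using tendstoD[OF Fi_tendsto_tau[OF h(1) sab(2)], of "g/2"] g unfolding eventually_at by auto
  define d where "d = min (min da db) (min (g / 2) ((\<tau>0 - \<bar>s0\<bar>) / 2))"
  have d: "d > 0" using da db g s0 by (auto simp: d_def)
  show "\<exists>d>0. \<forall>p\<in>V. dist p p0 < d \<longrightarrow> dist (t0 a (fst p) (snd p)) (t0 a (fst p0) (snd p0)) < e"
  proof (intro exI[of _ d] conjI ballI impI d)
    fix p assume pV: "p \<in> V" and dp: "dist p p0 < d"
    obtain \<tau> \<rho> where pe: "p = (\<tau>, \<rho>)" by (cases p)
    have hp: "0 < \<tau>" "0 < \<rho>" "\<rho> < 2 * rho_M a \<tau>" using pV by (auto simp: V_def pe)
    have dt: "\<bar>\<tau> - \<tau>0\<bar> < d" "\<bar>\<rho> - \<rho>0\<bar> < d"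
      using dp dist_fst_le[of p p0] dist_snd_le[of p p0] by (auto simp: pe p0e dist_real_def)
    have Fa: "\<bar>Fi a \<tau> sa - Fi a \<tau>0 sa\<bar> < g / 2"
      using da(2)[of \<tau>] dt g by (cases "\<tau> = \<tau>0") (auto simp: dist_real_def d_def)
    have Fb: "\<bar>Fi a \<tau> sb - Fi a \<tau>0 sb\<bar> < g / 2"
      using db(2)[of \<tau>] dt g by (cases "\<tau> = \<tau>0") (auto simp: dist_real_def d_def)
    have "d \<le> (\<tau>0 - \<bar>s0\<bar>) / 2" unfolding d_def by (intro min.coboundedI2) simp
    then have t2: "2 * \<tau> > \<bar>s0\<bar> + \<tau>0" using dt(1) unfolding abs_less_iff by (simp add: field_simps)
    have r2: "2 * r \<le> \<tau>0 - \<bar>s0\<bar>" using r(3) by (simp add: field_simps)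
    have "- \<bar>s0\<bar> \<le> s0" "s0 \<le> \<bar>s0\<bar>" by auto
    then have sab': "sa \<in> {-\<tau><..<\<tau>}" "sb \<in> {-\<tau><..<\<tau>}" using r(1) t2 r2 unfolding sa_def sb_def greaterThanLessThan_iff
      by linarith+
    have "d \<le> g / 2" unfolding d_def by (intro min.coboundedI2 min.cobounded1)
    then have dg: "2 * d \<le> g" by (simp add: field_simps)
    have Fa2: "2 * \<bar>Fi a \<tau> sa - Fi a \<tau>0 sa\<bar> < g" using Fa by (simp add: field_simps)
    have Fb2: "2 * \<bar>Fi a \<tau> sb - Fi a \<tau>0 sb\<bar> < g" using Fb by (simp add: field_simps)
    have g1: "g \<le> Fi a \<tau>0 sa - \<rho>0" "g \<le> \<rho>0 - Fi a \<tau>0 sb" by (auto simp: g_def)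
    have ab: "- (Fi a \<tau> sa - Fi a \<tau>0 sa) \<le> \<bar>Fi a \<tau> sa - Fi a \<tau>0 sa\<bar>"
      "Fi a \<tau> sb - Fi a \<tau>0 sb \<le> \<bar>Fi a \<tau> sb - Fi a \<tau>0 sb\<bar>" by auto
    have rho_a: "\<rho> < Fi a \<tau> sa" using Fa2 dt(2) dg g1 ab unfolding abs_less_iff by (smt (verit))
    have rho_b: "Fi a \<tau> sb < \<rho>" using Fb2 dt(2) dg g1 ab unfolding abs_less_iff by (smt (verit))
    define s where "s = t0 a \<tau> \<rho>"
    have s: "s \<in> {-\<tau><..<\<tau>}" "Fi a \<tau> s = \<rho>" using t0_props[OF R hp] by (auto simp: s_def)
    have "sa < s"
    proof (rule ccontr)
      assume "\<not> sa < s"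
      then have "s \<le> sa" by simp
      then have "Fi a \<tau> sa \<le> Fi a \<tau> s" using Fi_strict[OF R hp(1), of s sa] s sab' by (cases "s = sa") auto
      then show False using s rho_a by simp
    qed
    moreover have "s < sb"
    proof (rule ccontr)
      assume "\<not> s < sb"
      then have "sb \<le> s" by simp
      then have "Fi a \<tau> s \<le> Fi a \<tau> sb" using Fi_strict[OF R hp(1), of sb s] s sab' by (cases "s = sb") auto
      then show False using s rho_b by simp
    qed
    ultimately show "dist (t0 a (fst p) (snd p)) (t0 a (fst p0) (snd p0)) < e"
      using r by (auto simp: pe p0e s_def[symmetric] s0_def[symmetric] dist_real_def sa_def sb_def)
  qed
qed

end


definition Gf :: "(real \<Rightarrow> real) \<Rightarrow> real \<Rightarrow> real \<Rightarrow> real" where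
  "Gf a \<tau> s = (if s = 0 then 0 else gthth_raw a \<tau> s)"

definition w2 :: "(real \<Rightarrow> real) \<Rightarrow> real \<Rightarrow> real" where
  "w2 a t = 1 / ((a t)\<^sup>2 * deriv a t)"

definition w2' :: "(real \<Rightarrow> real) \<Rightarrow> real \<Rightarrow> real" where
  "w2' a t = - ((2 * a t * (deriv a t)\<^sup>2 + (a t)\<^sup>2 * deriv (deriv a) t) / ((a t)\<^sup>2 * deriv a t)\<^sup>2)"

context
  fixes a :: "real \<Rightarrow> real"
  assumes R: "regular_scale_factor a"
begin

lemma w2_deriv: "0 < t \<Longrightarrow> (w2 a has_real_derivative w2' a t) (at t)"
  unfolding w2_def[abs_def] w2'_def
  using dnz[OF R, of t] apos[OF R, of t]
  by (auto intro!: derivative_eq_intros dda[OF R] da[OF R] simp: field_simps power2_eq_square)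

lemma w2_cont: "continuous_on {0<..} (w2' a)"
proof -
  have nz: "x \<in> {0<..} \<Longrightarrow> a x \<noteq> 0 \<and> deriv a x \<noteq> 0" for x
    using apos[OF R, of x] dnz[OF R, of x] by auto
  show ?thesis unfolding w2'_def[abs_def] by (intro continuous_intros ddcont[OF R] dcont[OF R] acont'[OF R]) (auto simp: nz)
qed

definition kk where "kk \<tau> t = 1 / a t * (a \<tau> / sqrt ((a \<tau>)\<^sup>2 - (a t)\<^sup>2))"

lemma kk_simp: "kk \<tau> t = (a \<tau> / sqrt ((a \<tau>)\<^sup>2 - (a t)\<^sup>2)) / a t"
  unfolding kk_def by simp

lemma kk_eq: "0 < t \<Longrightarrow> kk \<tau> t = a \<tau> * (w2 a t * a t * deriv a t / sqrt ((a \<tau>)\<^sup>2 - (a t)\<^sup>2))"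
  unfolding kk_def w2_def using dnz[OF R, of t] apos[OF R, of t] by (simp add: field_simps power2_eq_square)

lemma chi_kk: "chi a u \<tau> = integral {u..\<tau>} (kk \<tau>)"
  unfolding chi_def kk_def by simp

lemma chi_eq: assumes "0 < u" "u \<le> \<tau>"
  shows "chi a u \<tau> = a \<tau> * integral {u..\<tau>} (\<lambda>t. w2 a t * a t * deriv a t / sqrt ((a \<tau>)\<^sup>2 - (a t)\<^sup>2))"
proof -
  have "chi a u \<tau> = integral {u..\<tau>} (\<lambda>t. a \<tau> * (w2 a t * a t * deriv a t / sqrt ((a \<tau>)\<^sup>2 - (a t)\<^sup>2)))"
    unfolding chi_kk using assms by (intro integral_cong) (auto simp: kk_eq)
  also have "\<dots> = a \<tau> * integral {u..\<tau>} (\<lambda>t. w2 a t * a t * deriv a t / sqrt ((a \<tau>)\<^sup>2 - (a t)\<^sup>2))"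
    by (rule Henstock_Kurzweil_Integration.integral_mult_right)
  finally show ?thesis .
qed

lemma kk_int: assumes "0 < u" "u \<le> \<tau>" shows "kk \<tau> integrable_on {u..\<tau>}"
proof -
  have "(\<lambda>t. w2 a t * a t * deriv a t / sqrt ((a \<tau>)\<^sup>2 - (a t)\<^sup>2)) integrable_on {u..\<tau>}"
    using ibp[OF R, where w="w2 a" and w'="w2' a", OF w2_deriv w2_cont assms] by blast
  then have "(\<lambda>t. a \<tau> * (w2 a t * a t * deriv a t / sqrt ((a \<tau>)\<^sup>2 - (a t)\<^sup>2))) integrable_on {u..\<tau>}"
    by (rule integrable_on_mult_right)
  then show ?thesis by (rule iffD1[OF integrable_cong, rotated]) (use assms kk_eq in auto)
qed

lemma kk_nonneg: "0 < t \<Longrightarrow> t \<le> \<tau> \<Longrightarrow> 0 \<le> kk \<tau> t"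
  unfolding kk_def using apos[OF R, of t] apos[OF R, of \<tau>] amono_le[OF R, of t \<tau>]
  by (auto intro!: mult_nonneg_nonneg divide_nonneg_nonneg simp: power_mono)

lemma chi_nonneg: "0 < u \<Longrightarrow> u \<le> \<tau> \<Longrightarrow> 0 \<le> chi a u \<tau>"
  unfolding chi_kk by (rule integral_nonneg[OF kk_int]) (auto intro: kk_nonneg)

lemma J_tendsto:
  assumes "0 < s0" "s0 < \<tau>0" "(S \<longlongrightarrow> s0) F" "(T \<longlongrightarrow> \<tau>0) F"
  shows "((\<lambda>p. integral {S p..T p} (\<lambda>t. w2 a t * a t * deriv a t / sqrt ((a (T p))\<^sup>2 - (a t)\<^sup>2)))
          \<longlongrightarrow> integral {s0..\<tau>0} (\<lambda>t. w2 a t * a t * deriv a t / sqrt ((a \<tau>0)\<^sup>2 - (a t)\<^sup>2))) F"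
  by (rule sing_tendsto[OF R, where w="w2 a" and w'="w2' a", OF w2_deriv w2_cont assms])

lemma chi_tendsto:
  assumes "0 < s0" "s0 < \<tau>0" and S: "(S \<longlongrightarrow> s0) F" and T: "(T \<longlongrightarrow> \<tau>0) F"
  shows "((\<lambda>p. chi a (S p) (T p)) \<longlongrightarrow> chi a s0 \<tau>0) F"
proof -
  have "((\<lambda>p. a (T p) * integral {S p..T p} (\<lambda>t. w2 a t * a t * deriv a t / sqrt ((a (T p))\<^sup>2 - (a t)\<^sup>2)))
      \<longlongrightarrow> a \<tau>0 * integral {s0..\<tau>0} (\<lambda>t. w2 a t * a t * deriv a t / sqrt ((a \<tau>0)\<^sup>2 - (a t)\<^sup>2))) F"
    by (intro tendsto_mult J_tendsto assms isCont_tendsto_compose[OF aisCont[OF R]]) (use assms in auto)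
  moreover have "eventually (\<lambda>p. 0 < S p \<and> S p < (s0 + \<tau>0) / 2 \<and> (s0 + \<tau>0) / 2 < T p) F"
    using order_tendstoD(1)[OF S, of 0] order_tendstoD(2)[OF S, of "(s0 + \<tau>0) / 2"]
      order_tendstoD(1)[OF T, of "(s0 + \<tau>0) / 2"] assms by (auto simp: eventually_conj)
  ultimately show ?thesis
    using chi_eq[of s0 \<tau>0] assms
    by (auto elim!: tendsto_cong[THEN iffD1, rotated] eventually_mono intro!: chi_eq[symmetric])
qed

lemma G_cont_nz: assumes "0 < \<tau>0" "\<bar>s0\<bar> < \<tau>0" "s0 \<noteq> 0"
  shows "isCont (\<lambda>p. Gf a (fst p) (snd p)) (\<tau>0, s0)"
  unfolding isCont_def
proof -
  have fs: "(fst \<longlongrightarrow> \<tau>0) (at (\<tau>0, s0))" "((\<lambda>p. \<bar>snd p\<bar>) \<longlongrightarrow> \<bar>s0\<bar>) (at (\<tau>0, s0))"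
    by (auto intro!: tendsto_eq_intros)
  have "((\<lambda>p. (a \<bar>snd p\<bar>)\<^sup>2 * (chi a \<bar>snd p\<bar> (fst p))\<^sup>2) \<longlongrightarrow> (a \<bar>s0\<bar>)\<^sup>2 * (chi a \<bar>s0\<bar> \<tau>0)\<^sup>2) (at (\<tau>0, s0))"
    by (intro tendsto_intros chi_tendsto[OF _ _ fs(2,1)] isCont_tendsto_compose[OF aabs_isCont[OF R]])
       (use assms in \<open>auto intro!: tendsto_eq_intros\<close>)
  moreover have "eventually (\<lambda>p. 0 < \<bar>snd p\<bar>) (at (\<tau>0, s0))"
    using order_tendstoD(1)[OF fs(2), of 0] assms by auto
  ultimately have "((\<lambda>p. Gf a (fst p) (snd p)) \<longlongrightarrow> (a \<bar>s0\<bar>)\<^sup>2 * (chi a \<bar>s0\<bar> \<tau>0)\<^sup>2) (at (\<tau>0, s0))"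
    by (auto elim!: tendsto_cong[THEN iffD1, rotated] eventually_mono simp: Gf_def gthth_raw_def aext_def)
  then show "((\<lambda>p. Gf a (fst p) (snd p)) \<longlongrightarrow> Gf a (fst (\<tau>0, s0)) (snd (\<tau>0, s0))) (at (\<tau>0, s0))"
    using assms by (simp add: Gf_def gthth_raw_def aext_def)
qed

lemma psi_small: assumes m: "0 < m" and e: "0 < e"
  shows "\<exists>d>0. \<forall>u. 0 < u \<and> u < d \<longrightarrow> a u * integral {u..m} (\<lambda>t. 1 / a t) < e"
proof -
  define \<eta> where "\<eta> = min (e / 2) (m / 2)"
  have eta: "0 < \<eta>" "\<eta> < m" "\<eta> \<le> e / 2" using m e by (auto simp: \<eta>_def)
  have aeta: "0 < a \<eta>" using apos[OF R eta(1)] .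
  define e' where "e' = a \<eta> * e / (2 * m)"
  have e': "0 < e'" using aeta e m by (simp add: e'_def)
  obtain d0 where d0: "d0 > 0" "\<And>u. u \<in> {0..} \<Longrightarrow> dist u 0 < d0 \<Longrightarrow> dist (a u) (a 0) < e'"
    using acont[OF R] e' unfolding continuous_on_iff by (metis atLeast_iff order_refl)
  show ?thesis
  proof (intro exI[of _ "min d0 \<eta>"] conjI allI impI)
    show "0 < min d0 \<eta>" using d0 eta by simp
    fix u assume u: "0 < u \<and> u < min d0 \<eta>"
    have au: "0 < a u" "a u < e'" using apos[OF R, of u] d0(2)[of u] u a0[OF R] by (auto simp: dist_real_def)
    have ic: "continuous_on {u..m} (\<lambda>t. 1 / a t)"
    proof (intro continuous_intros continuous_on_subset[OF acont'[OF R]] ballI)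
      fix t assume "t \<in> {u..m}"
      then have "0 < t" using u by auto
      then show "a t \<noteq> 0" using apos[OF R, of t] by simp
    qed (use u in auto)
    have int: "(\<lambda>t. 1 / a t) integrable_on {u..m}" using ic integrable_continuous_interval by blast
    have i1: "integral {u..\<eta>} (\<lambda>t. 1 / a t) \<le> integral {u..\<eta>} (\<lambda>t. 1 / a u)"
    proof (rule integral_le)
      show "(\<lambda>t. 1 / a t) integrable_on {u..\<eta>}" by (rule integrable_subinterval_real[OF int]) (use u eta in auto)
      fix t assume t: "t \<in> {u..\<eta>}"
      show "1 / a t \<le> 1 / a u" using au amono_le[OF R, of u t] t u by (intro frac_le) auto
    qed (rule integrable_continuous_interval[OF continuous_on_const])
    have i2: "integral {\<eta>..m} (\<lambda>t. 1 / a t) \<le> integral {\<eta>..m} (\<lambda>t. 1 / a \<eta>)"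
    proof (rule integral_le)
      show "(\<lambda>t. 1 / a t) integrable_on {\<eta>..m}" by (rule integrable_subinterval_real[OF int]) (use u eta in auto)
      fix t assume t: "t \<in> {\<eta>..m}"
      show "1 / a t \<le> 1 / a \<eta>" using aeta amono_le[OF R, of \<eta> t] t eta by (intro frac_le) auto
    qed (rule integrable_continuous_interval[OF continuous_on_const])
    have split: "integral {u..m} (\<lambda>t. 1 / a t) = integral {u..\<eta>} (\<lambda>t. 1 / a t) + integral {\<eta>..m} (\<lambda>t. 1 / a t)"
      using Henstock_Kurzweil_Integration.integral_combine[OF _ _ int, of \<eta>] u eta by simp
    have c1: "integral {u..\<eta>} (\<lambda>t. 1 / a u) = (\<eta> - u) / a u" using u by (simp add: content_real)
    have c2: "integral {\<eta>..m} (\<lambda>t. 1 / a \<eta>) = (m - \<eta>) / a \<eta>" using eta by (simp add: content_real)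
    have "a u * integral {u..m} (\<lambda>t. 1 / a t) \<le> a u * ((\<eta> - u) / a u + (m - \<eta>) / a \<eta>)"
      using split i1 i2 c1 c2 au by (intro mult_left_mono) auto
    also have "\<dots> = (\<eta> - u) + a u * (m - \<eta>) / a \<eta>" using au by (simp add: field_simps)
    also have "\<dots> < e"
    proof -
      have "a u * (m - \<eta>) / a \<eta> \<le> e' * m / a \<eta>"
        using au eta aeta m by (intro divide_right_mono mult_mono) auto
      also have "\<dots> = e / 2" using aeta m by (simp add: e'_def field_simps)
      finally have h: "a u * (m - \<eta>) / a \<eta> \<le> e / 2" .
      have "0 < u" using u by simp
      define X where "X = a u * (m - \<eta>) / a \<eta>"
      have "2 * X \<le> e" using h unfolding X_def[symmetric] by simp
      moreover have "2 * \<eta> \<le> e" using eta(3) by simp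
      ultimately show ?thesis using \<open>0 < u\<close> unfolding X_def[symmetric] by linarith
    qed
    finally show "a u * integral {u..m} (\<lambda>t. 1 / a t) < e" .
  qed
qed

end


context
  fixes a :: "real \<Rightarrow> real"
  assumes R: "regular_scale_factor a"
begin


lemma inva_int: "0 < u \<Longrightarrow> (\<lambda>t. 1 / a t) integrable_on {u..m}"
proof -
  assume u: "0 < u"
  have "continuous_on {u..m} (\<lambda>t. 1 / a t)"
  proof (intro continuous_intros continuous_on_subset[OF acont'[OF R]] ballI)
    fix t assume "t \<in> {u..m}"
    then have "0 < t" using u by auto
    then show "a t \<noteq> 0" using apos[OF R, of t] by simp
  qed (use u in auto)
  then show ?thesis using integrable_continuous_interval by blast
qed

lemma psi_nonneg: "0 \<le> u \<Longrightarrow> 0 \<le> a u * integral {u..m} (\<lambda>t. 1 / a t)"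
proof -
  assume u: "0 \<le> u"
  show ?thesis
  proof (cases "u = 0")
    case True then show ?thesis by (simp add: a0[OF R])
  next
    case False
    then have u': "0 < u" using u by simp
    have "0 \<le> integral {u..m} (\<lambda>t. 1 / a t)"
      by (rule integral_nonneg[OF inva_int[OF u']]) (use u' anonneg[OF R] in auto)
    then show ?thesis using anonneg[OF R u] by simp
  qed
qed

lemma G_cont_zero: assumes t: "0 < \<tau>0" shows "isCont (\<lambda>p. Gf a (fst p) (snd p)) (\<tau>0, 0)"
  unfolding isCont_def
proof -
  define m where "m = \<tau>0 / 2"
  define \<tau>1 where "\<tau>1 = (m + \<tau>0) / 2"
  have o: "0 < m" "m < \<tau>1" "\<tau>1 < \<tau>0" "\<tau>0 < 2 * \<tau>0" using t by (simp_all add: m_def \<tau>1_def field_simps)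
  have am: "0 < a m" "a m < a \<tau>1" using apos[OF R o(1)] amono[OF R, of m \<tau>1] o by auto
  define D where "D = sqrt ((a \<tau>1)\<^sup>2 - (a m)\<^sup>2)"
  have D: "0 < D" using am by (simp add: D_def power_strict_mono)
  define C where "C = a (2 * \<tau>0) / D"
  have C: "0 \<le> C" using anonneg[OF R, of "2 * \<tau>0"] t D by (simp add: C_def)
  define \<psi> where "\<psi> u = a u * integral {u..m} (\<lambda>t. 1 / a t)" for u
  define Bd where "Bd p = C * \<psi> \<bar>snd p\<bar> + a \<bar>snd p\<bar> * \<bar>chi a m (fst p)\<bar>" for p :: "real \<times> real"
  let ?F = "at (\<tau>0, 0::real)"
  have fs: "(fst \<longlongrightarrow> \<tau>0) ?F" "((\<lambda>p. \<bar>snd p\<bar>) \<longlongrightarrow> 0) ?F"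
    by (auto intro!: tendsto_eq_intros)
  have ev: "eventually (\<lambda>p. \<tau>1 < fst p \<and> fst p < 2 * \<tau>0 \<and> \<bar>snd p\<bar> < m) ?F"
    using order_tendstoD(1)[OF fs(1) o(3)] order_tendstoD(2)[OF fs(1) o(4)] order_tendstoD(2)[OF fs(2) o(1)]
    by (auto simp: eventually_conj)
  have lim_psi: "((\<lambda>p. \<psi> \<bar>snd p\<bar>) \<longlongrightarrow> 0) ?F"
  proof (rule tendstoI)
    fix e :: real assume e: "0 < e"
    obtain d where d: "d > 0" "\<And>u. 0 < u \<and> u < d \<Longrightarrow> a u * integral {u..m} (\<lambda>t. 1 / a t) < e"
      using psi_small[OF R o(1) e] by blast
    show "eventually (\<lambda>p. dist (\<psi> \<bar>snd p\<bar>) 0 < e) ?F"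
      using order_tendstoD(2)[OF fs(2) d(1)]
    proof eventually_elim
      case (elim p)
      show ?case
      proof (cases "snd p = 0")
        case True then show ?thesis using e by (simp add: \<psi>_def a0[OF R])
      next
        case False
        then have "\<psi> \<bar>snd p\<bar> < e" using d(2)[of "\<bar>snd p\<bar>"] elim by (simp add: \<psi>_def)
        moreover have "0 \<le> \<psi> \<bar>snd p\<bar>" unfolding \<psi>_def by (rule psi_nonneg) simp
        ultimately show ?thesis by (simp add: dist_real_def)
      qed
    qed
  qed
  have lim_chi: "((\<lambda>p. chi a m (fst p)) \<longlongrightarrow> chi a m \<tau>0) ?F"
    by (rule chi_tendsto[OF R, of m \<tau>0 "\<lambda>_. m"]) (use o fs in auto)
  have lim_a: "((\<lambda>p. a \<bar>snd p\<bar>) \<longlongrightarrow> 0) ?F"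
  proof -
    have "(snd \<longlongrightarrow> 0) ?F" by (auto intro!: tendsto_eq_intros)
    from isCont_tendsto_compose[OF aabs_isCont[OF R, of 0] this] show ?thesis by (simp add: a0[OF R])
  qed
  have lim_Bd: "(Bd \<longlongrightarrow> 0) ?F"
    using tendsto_add[OF tendsto_mult[OF tendsto_const[of C] lim_psi] tendsto_mult[OF lim_a tendsto_rabs[OF lim_chi]]]
    unfolding Bd_def by simp
  have bound: "eventually (\<lambda>p. norm (Gf a (fst p) (snd p)) \<le> (Bd p)\<^sup>2) ?F"
    using ev
  proof eventually_elim
    case (elim p)
    define \<tau> where "\<tau> = fst p"
    define u where "u = \<bar>snd p\<bar>"
    have h: "\<tau>1 < \<tau>" "\<tau> < 2 * \<tau>0" "u < m" using elim by (auto simp: \<tau>_def u_def)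
    have Bd0: "0 \<le> Bd p" unfolding Bd_def using C psi_nonneg[of "\<bar>snd p\<bar>" m] anonneg[OF R, of "\<bar>snd p\<bar>"]
      by (auto simp: \<psi>_def)
    show ?case
    proof (cases "snd p = 0")
      case True then show ?thesis by (simp add: Gf_def)
    next
      case False
      then have u: "0 < u" by (simp add: u_def)
      have int_u: "kk a \<tau> integrable_on {u..\<tau>}" using kk_int[OF R u] h o by auto
      have split: "chi a u \<tau> = integral {u..m} (kk a \<tau>) + chi a m \<tau>"
        using Henstock_Kurzweil_Integration.integral_combine[OF _ _ int_u, of m] h o
        by (simp add: chi_kk[OF R])
      have int_um: "kk a \<tau> integrable_on {u..m}" by (rule integrable_subinterval_real[OF int_u]) (use h o in auto)
      have I1: "integral {u..m} (kk a \<tau>) \<le> integral {u..m} (\<lambda>t. C * (1 / a t))"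
      proof (rule integral_le[OF int_um])
        show "(\<lambda>t. C * (1 / a t)) integrable_on {u..m}" using inva_int[OF u] by (rule integrable_on_mult_right)
        fix t assume tt: "t \<in> {u..m}"
        have t0': "0 < t" using tt u by auto
        have at: "0 < a t" "a t \<le> a m" using apos[OF R t0'] amono_le[OF R, of t m] tt t0' by auto
        have "a \<tau>1 \<le> a \<tau>" using amono_le[OF R, of \<tau>1 \<tau>] h o by auto
        then have "(a \<tau>1)\<^sup>2 - (a m)\<^sup>2 \<le> (a \<tau>)\<^sup>2 - (a t)\<^sup>2"
          using at am by (intro diff_mono power_mono) auto
        then have sq: "D \<le> sqrt ((a \<tau>)\<^sup>2 - (a t)\<^sup>2)" unfolding D_def by simp
        have "a \<tau> / sqrt ((a \<tau>)\<^sup>2 - (a t)\<^sup>2) \<le> C"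
          unfolding C_def
          using anonneg[OF R, of \<tau>] amono_le[OF R, of \<tau> "2*\<tau>0"] h o D sq by (intro frac_le) auto
        then have "(a \<tau> / sqrt ((a \<tau>)\<^sup>2 - (a t)\<^sup>2)) / a t \<le> C / a t"
          using at by (intro divide_right_mono) auto
        moreover have "kk a \<tau> t = (a \<tau> / sqrt ((a \<tau>)\<^sup>2 - (a t)\<^sup>2)) / a t" by (rule kk_simp[OF R])
        ultimately show "kk a \<tau> t \<le> C * (1 / a t)" by simp
      qed
      have I0: "0 \<le> integral {u..m} (kk a \<tau>)"
        by (rule integral_nonneg[OF int_um]) (use u h o in \<open>auto intro!: kk_nonneg[OF R]\<close>)
      have au: "0 < a u" using apos[OF R u] .
      have chi_pos: "0 \<le> chi a u \<tau>" using chi_nonneg[OF R u] h o by auto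
      have "a u * chi a u \<tau> \<le> a u * (C * integral {u..m} (\<lambda>t. 1 / a t)) + a u * \<bar>chi a m \<tau>\<bar>"
      proof -
        have "chi a u \<tau> \<le> C * integral {u..m} (\<lambda>t. 1 / a t) + \<bar>chi a m \<tau>\<bar>"
        proof -
          have "integral {u..m} (\<lambda>t. C * (1 / a t)) = C * integral {u..m} (\<lambda>t. 1 / a t)"
            by (rule Henstock_Kurzweil_Integration.integral_mult_right)
          moreover have "chi a m \<tau> \<le> \<bar>chi a m \<tau>\<bar>" by simp
          ultimately show ?thesis using split I1 by linarith
        qed
        then show ?thesis using au by (simp add: distrib_left[symmetric])
      qed
      also have "\<dots> = Bd p" unfolding Bd_def \<psi>_def u_def[symmetric] \<tau>_def[symmetric] by (simp add: algebra_simps)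
      finally have le: "a u * chi a u \<tau> \<le> Bd p" .
      have "norm (Gf a (fst p) (snd p)) = (a u * chi a u \<tau>)\<^sup>2"
        using False by (simp add: Gf_def gthth_raw_def aext_def u_def \<tau>_def power_mult_distrib)
      also have "\<dots> \<le> (Bd p)\<^sup>2" using le au chi_pos by (intro power_mono) auto
      finally show ?thesis .
    qed
  qed
  have "((\<lambda>p. Gf a (fst p) (snd p)) \<longlongrightarrow> 0) ?F"
    by (rule Lim_null_comparison[OF bound]) (use tendsto_power[OF lim_Bd, of 2] in simp)
  then show "((\<lambda>p. Gf a (fst p) (snd p)) \<longlongrightarrow> Gf a (fst (\<tau>0, 0)) (snd (\<tau>0, 0))) ?F"
    by (simp add: Gf_def)
qed

end


context
  fixes a :: "real \<Rightarrow> real"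
  assumes R: "regular_scale_factor a"
begin

definition U where "U = {p :: real \<times> real. 0 < fst p \<and> \<bar>snd p\<bar> < fst p}"

lemma G_cont: "continuous_on U (\<lambda>p. Gf a (fst p) (snd p))"
proof (rule continuous_at_imp_continuous_on, rule ballI)
  fix p assume "p \<in> U"
  then obtain \<tau> s where p: "p = (\<tau>, s)" "0 < \<tau>" "\<bar>s\<bar> < \<tau>" by (cases p) (auto simp: U_def)
  show "isCont (\<lambda>p. Gf a (fst p) (snd p)) p"
  proof (cases "s = 0")
    case True then show ?thesis using G_cont_zero[OF R p(2)] p by simp
  next
    case False then show ?thesis using G_cont_nz[OF R p(2,3)] p by simp
  qed
qed

lemma raw_tendsto: assumes "0 < \<tau>" shows "(gthth_raw a \<tau> \<longlongrightarrow> 0) (at 0)"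
proof -
  have "((\<lambda>s. (\<tau>, s)) \<longlongrightarrow> (\<tau>, 0)) (at (0::real))" by (auto intro!: tendsto_eq_intros)
  from isCont_tendsto_compose[OF G_cont_zero[OF R assms] this]
  have "((\<lambda>s. Gf a \<tau> s) \<longlongrightarrow> 0) (at 0)" by (simp add: Gf_def)
  moreover have "eventually (\<lambda>s. s \<noteq> 0) (at (0::real))" by (simp add: eventually_at_filter)
  ultimately show ?thesis
    by (auto elim!: tendsto_cong[THEN iffD1, rotated] eventually_mono simp: Gf_def)
qed

lemma g_thth_eq: assumes "0 < \<tau>" shows "g_thth a \<tau> \<rho> = Gf a \<tau> (t0 a \<tau> \<rho>)"
proof (cases "t0 a \<tau> \<rho> = 0")
  case True
  have "Lim (at 0) (gthth_raw a \<tau>) = 0" by (rule tendsto_Lim[OF _ raw_tendsto[OF assms]]) simp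
  then show ?thesis using True by (simp add: g_thth_def Gf_def Let_def)
next
  case False then show ?thesis by (simp add: g_thth_def Gf_def Let_def)
qed

lemma rho_max_le: "rho_max a \<tau> \<le> 2 * rho_M a \<tau>"
proof (cases "{\<rho>. 0 < \<rho> \<and> \<rho> < 2 * rho_M a \<tau> \<and> g_tautau a \<tau> \<rho> = 0} = {}")
  case True then show ?thesis by (simp add: rho_max_def Let_def)
next
  case False
  then obtain x where x: "0 < x" "x < 2 * rho_M a \<tau>" "g_tautau a \<tau> x = 0" by auto
  have "Inf {\<rho>. 0 < \<rho> \<and> \<rho> < 2 * rho_M a \<tau> \<and> g_tautau a \<tau> \<rho> = 0} \<le> x"
    by (rule cInf_lower) (use x in \<open>auto intro: bdd_belowI[of _ 0]\<close>)
  then show ?thesis using False x by (simp add: rho_max_def Let_def)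
qed

lemma main:
  shows "(\<forall>\<tau>>0. \<exists>L. (gthth_raw a \<tau> \<longlongrightarrow> L) (at 0))
    \<and> continuous_on (D_polar a c d) (\<lambda>(\<tau>, \<rho>, \<theta>, \<phi>). g_thth a \<tau> \<rho>)
    \<and> continuous_on (D_polar a c d) (\<lambda>(\<tau>, \<rho>, \<theta>, \<phi>). g_phph a \<tau> \<rho> \<theta>)"
proof (intro conjI allI impI)
  fix \<tau> :: real assume "0 < \<tau>"
  then show "\<exists>L. (gthth_raw a \<tau> \<longlongrightarrow> L) (at 0)" using raw_tendsto by blast
next
  let ?D = "D_polar a c d"
  have inD: "0 < fst q" "0 < fst (snd q)" "fst (snd q) < 2 * rho_M a (fst q)" if "q \<in> ?D" for q
    using that rho_max_le[of "fst q"] by (auto simp: D_polar_def)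
  have img: "(\<lambda>q. (fst q, fst (snd q))) ` ?D \<subseteq> V a" using inD by (auto simp: V_mem[OF R])
  have cp: "continuous_on ?D (\<lambda>q. (fst q, fst (snd q)))" by (intro continuous_intros)
  have ct: "continuous_on ?D (\<lambda>q. t0 a (fst q) (fst (snd q)))"
    using continuous_on_compose2[OF t0_cont[OF R] cp img] by simp
  have c1: "continuous_on ?D (\<lambda>q. Gf a (fst q) (t0 a (fst q) (fst (snd q))))"
  proof (rule continuous_on_compose2[OF G_cont, of _ "\<lambda>q. (fst q, t0 a (fst q) (fst (snd q)))", simplified])
    show "continuous_on ?D (\<lambda>q. (fst q, t0 a (fst q) (fst (snd q))))"
      by (intro continuous_on_Pair ct continuous_intros)
    show "(\<lambda>q. (fst q, t0 a (fst q) (fst (snd q)))) ` ?D \<subseteq> U"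
    proof
      fix y assume "y \<in> (\<lambda>q. (fst q, t0 a (fst q) (fst (snd q)))) ` ?D"
      then obtain q where q: "q \<in> ?D" "y = (fst q, t0 a (fst q) (fst (snd q)))" by auto
      from t0_props[OF R inD[OF q(1)]] show "y \<in> U" using q inD[OF q(1)] by (auto simp: U_def)
    qed
  qed
  have eq: "(case q of (\<tau>, \<rho>, \<theta>, \<phi>) \<Rightarrow> g_thth a \<tau> \<rho>) = Gf a (fst q) (t0 a (fst q) (fst (snd q)))"
    if "q \<in> ?D" for q
    using g_thth_eq[OF inD(1)[OF that]] by (auto split: prod.splits)
  show "continuous_on ?D (\<lambda>(\<tau>, \<rho>, \<theta>, \<phi>). g_thth a \<tau> \<rho>)"
    by (rule continuous_on_eq[OF c1]) (simp add: eq)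
  have c2: "continuous_on ?D (\<lambda>q. Gf a (fst q) (t0 a (fst q) (fst (snd q))) * (sin (fst (snd (snd q))))\<^sup>2)"
    by (intro continuous_on_mult c1 continuous_intros)
  show "continuous_on ?D (\<lambda>(\<tau>, \<rho>, \<theta>, \<phi>). g_phph a \<tau> \<rho> \<theta>)"
    by (rule continuous_on_eq[OF c2]) (use eq in \<open>auto simp: g_phph_def split: prod.splits\<close>)
qed

end

theorem theorem7p3:
  fixes a :: "real \<Rightarrow> real" and c d :: real
  assumes "regular_scale_factor a"
  shows "(\<forall>\<tau>>0. \<exists>L. (gthth_raw a \<tau> \<longlongrightarrow> L) (at 0))
    \<and> continuous_on (D_polar a c d) (\<lambda>(\<tau>, \<rho>, \<theta>, \<phi>). g_thth a \<tau> \<rho>)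
    \<and> continuous_on (D_polar a c d) (\<lambda>(\<tau>, \<rho>, \<theta>, \<phi>). g_phph a \<tau> \<rho> \<theta>)"
  by (rule main[OF assms])


end
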